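(* Let $q\ge 2$ and $L\ge 2$ be integers and let $\mathcal{C}\subseteq[q]^n$ be a $q$-ary code. Suppose that for every subset $\{c_1,\dots,c_L\}$ of $L$ distinct codewords of $\mathcal{C}$, the average pairwise relative Hamming distance $\binom{L}{2}^{-1}\sum_{1\le i<j\le L}\delta(c_i,c_j)$ is at least $\delta$. Then $\mathcal{C}$ is $(J_q(\delta-\delta/L),\,L-1)$-list decodable.
   Context: $[q]=\{0,1,\dots,q-1\}$. For $x,y\in[q]^n$, $\delta(x,y)$ is the fraction of coordinates $i$ with $x_i\ne y_i$. A code $\mathcal{C}\subseteq[q]^n$ is $(\rho,\ell)$-list decodable if for every $y\in[q]^n$ the number of $c\in\mathcal{C}$ with $\delta(c,y)<\rho$ is at most $\ell$. The Johnson radius function $J_q:[0,1-1/q]\to[0,1]$ is $J_q(x)=\frac{q-1}{q}\Big(1-\sqrt{1-\frac{qx}{q-1}}\Big)$. *)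

theory Defs
  imports Complex_Main
begin

definition words :: "nat \<Rightarrow> nat \<Rightarrow> nat list set" where
  "words q n = {x. length x = n \<and> set x \<subseteq> {..<q}}"

definition rel_dist :: "nat list \<Rightarrow> nat list \<Rightarrow> real" where
  "rel_dist x y = real (card {i. i < length x \<and> x ! i \<noteq> y ! i}) / real (length x)"

definition list_decodable ::
  "nat \<Rightarrow> nat \<Rightarrow> nat list set \<Rightarrow> real \<Rightarrow> nat \<Rightarrow> bool" where
  "list_decodable q n C \<rho> l \<longleftrightarrow>
     (\<forall>y \<in> words q n. card {c \<in> C. rel_dist c y < \<rho>} \<le> l)"

definition johnson :: "nat \<Rightarrow> real \<Rightarrow> real" where
  "johnson q x = (real q - 1) / real q * (1 - sqrt (1 - real q * x / (real q - 1)))"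

end

theory Submission imports Defs "HOL-Analysis.Convex" begin

lemma choose2_real: "real (L choose 2) = real L * (real L - 1) / 2"
  by (cases L) (auto simp add: choose_two field_char_0_class.of_nat_div mod_eq_0_iff_dvd algebra_simps)

lemma rel_dist_sum:
  assumes "length x = n"
  shows "rel_dist x y = (\<Sum>k<n. if x!k \<noteq> y!k then 1 else 0) / real n"
proof -
  have e: "{i. i < length x \<and> x ! i \<noteq> y ! i} = {k\<in>{..<n}. x!k \<noteq> y!k}" using assms by auto
  have "real (card {k\<in>{..<n}. x!k \<noteq> y!k}) = (\<Sum>k\<in>{k\<in>{..<n}. x!k \<noteq> y!k}. 1::real)"
    by simp
  also have "\<dots> = (\<Sum>k<n. if x!k \<noteq> y!k then 1 else 0)"
    by (rule sum.inter_filter) simp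
  finally show ?thesis unfolding rel_dist_def e using assms by simp
qed

lemma count_sq:
  fixes v :: "nat \<Rightarrow> nat"
  assumes "\<forall>i<L. v i < q"
  shows "(\<Sum>i<L. \<Sum>j<L. if v i = v j then 1 else 0 :: real)
       = (\<Sum>b<q. (\<Sum>i<L. if v i = b then 1 else 0 :: real)^2)"
proof -
  have "(\<Sum>b<q. (\<Sum>i<L. if v i = b then 1 else 0 :: real)^2)
      = (\<Sum>b<q. (\<Sum>i<L. if v i = b then 1 else 0 :: real) * (\<Sum>j<L. if v j = b then 1 else 0 :: real))"
    by (simp only: power2_eq_square)
  also have "\<dots> = (\<Sum>b<q. \<Sum>i<L. \<Sum>j<L. (if v i = b then 1 else 0) * (if v j = b then 1 else 0 :: real))"
    by (simp only: sum_product)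
  also have "\<dots> = (\<Sum>i<L. \<Sum>b<q. \<Sum>j<L. (if v i = b then 1 else 0) * (if v j = b then 1 else 0 :: real))"
    by (rule sum.swap)
  also have "\<dots> = (\<Sum>i<L. \<Sum>j<L. \<Sum>b<q. (if v i = b then 1 else 0) * (if v j = b then 1 else 0 :: real))"
    by (rule sum.cong[OF refl], rule sum.swap)
  also have "\<dots> = (\<Sum>i<L. \<Sum>j<L. if v i = v j then 1 else 0 :: real)"
  proof (rule sum.cong[OF refl], rule sum.cong[OF refl])
    fix i j assume i: "i \<in> {..<L}"
    have "(\<Sum>b<q. (if v i = b then 1 else 0) * (if v j = b then 1 else 0 :: real))
        = (\<Sum>b<q. if b = v i then (if v j = v i then 1 else 0) else 0)"
      by (rule sum.cong[OF refl]) auto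
    also have "\<dots> = (if v i = v j then 1 else 0)" using assms i by (simp add: sum.delta)
    finally show "(\<Sum>b<q. (if v i = b then 1 else 0) * (if v j = b then 1 else 0 :: real)) = (if v i = v j then 1 else 0)" .
  qed
  finally show ?thesis by simp
qed

lemma per_coord:
  fixes v :: "nat \<Rightarrow> nat"
  assumes "\<forall>i<L. v i < q" "a < q" "q \<ge> 2"
  shows "(\<Sum>b<q. (\<Sum>i<L. if v i = b then 1 else 0 :: real)^2)
     \<ge> (\<Sum>i<L. if v i = a then 1 else 0 :: real)^2
       + (real L - (\<Sum>i<L. if v i = a then 1 else 0 :: real))^2 / (real q - 1)"
proof -
  define m where "m b = (\<Sum>i<L. if v i = b then 1 else 0 :: real)" for b
  have tot: "(\<Sum>b<q. m b) = real L"
  proof -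
    have "(\<Sum>b<q. m b) = (\<Sum>i<L. \<Sum>b<q. if v i = b then 1 else 0 :: real)"
      unfolding m_def by (rule sum.swap)
    also have "\<dots> = (\<Sum>i<L. 1)"
      using assms(1) by (intro sum.cong refl) (simp add: sum.delta)
    finally show ?thesis by simp
  qed
  define B where "B = {..<q} - {a}"
  have cB: "card B = q - 1" using assms unfolding B_def by simp
  have fB: "finite B" unfolding B_def by simp
  have s1: "(\<Sum>b<q. m b) = m a + (\<Sum>b\<in>B. m b)"
    unfolding B_def using assms by (simp add: sum.remove)
  have s2: "(\<Sum>b<q. (m b)^2) = (m a)^2 + (\<Sum>b\<in>B. (m b)^2)"
    unfolding B_def using assms by (simp add: sum.remove)
  have cs: "(\<Sum>b\<in>B. m b)^2 \<le> (\<Sum>b\<in>B. (m b)^2) * (real q - 1)"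
    using sum_squared_le_sum_of_squares[of m B] cB assms by (simp add: of_nat_diff)
  have q1: "real q - 1 > 0" using assms by simp
  have eqB: "real L - m a = (\<Sum>b\<in>B. m b)" using s1 tot by linarith
  have "(real L - m a)^2 / (real q - 1) \<le> (\<Sum>b\<in>B. (m b)^2)"
    unfolding eqB using cs q1 by (simp add: divide_le_eq)
  then show ?thesis using s2 unfolding m_def by simp
qed

lemma half_sum:
  fixes g :: "nat \<Rightarrow> nat \<Rightarrow> real"
  assumes "\<And>i j. i < L \<Longrightarrow> j < L \<Longrightarrow> g i j = g j i" "\<And>i. i < L \<Longrightarrow> g i i = 0"
  shows "(\<Sum>i<L. \<Sum>j<L. if i<j then g i j else 0) = (\<Sum>i<L. \<Sum>j<L. g i j) / 2"
proof -
  have "(\<Sum>i<L. \<Sum>j<L. g i j) = (\<Sum>i<L. \<Sum>j<L. (if i<j then g i j else 0) + (if j<i then g i j else 0))"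
    using assms(2) by (intro sum.cong refl) auto
  also have "\<dots> = (\<Sum>i<L. \<Sum>j<L. if i<j then g i j else 0) + (\<Sum>i<L. \<Sum>j<L. if j<i then g i j else 0)"
    by (simp add: sum.distrib)
  also have "(\<Sum>i<L. \<Sum>j<L. if j<i then g i j else 0) = (\<Sum>j<L. \<Sum>i<L. if j<i then g i j else 0)"
    by (rule sum.swap)
  also have "\<dots> = (\<Sum>j<L. \<Sum>i<L. if j<i then g j i else 0)"
    using assms(1) by (intro sum.cong refl) auto
  finally show ?thesis by simp
qed

lemma final_ineq:
  fixes Q e x :: real
  assumes "Q \<ge> 2" "0 \<le> e" "e < (Q - 1) / Q * (1 - sqrt (1 - Q * x / (Q - 1)))"
  shows "2*e - Q * e^2 / (Q - 1) < x"
proof -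
  define th where "th = (Q - 1) / Q"
  have th0: "th > 0" "th \<le> 1" using assms unfolding th_def by auto
  have f: "2*e - Q * e^2 / (Q - 1) = th - (th - e)^2 / th"
    using assms unfolding th_def by (simp add: field_simps power2_eq_square)
  have qx: "Q * x / (Q - 1) = x / th" using assms unfolding th_def by (simp add: field_simps)
  show ?thesis
  proof (cases "1 - x / th < 0")
    case True
    then have "x > th" using th0 by (simp add: field_simps)
    moreover have "(th - e)^2 / th \<ge> 0" using th0 by simp
    ultimately show ?thesis using f by linarith
  next
    case False
    define s where "s = sqrt (1 - x/th)"
    have s0: "s \<ge> 0" and ss: "s^2 = 1 - x/th" using False unfolding s_def by auto
    have "e < th * (1 - s)" using assms(3) qx unfolding th_def s_def by simp
    then have "th - e > th * s" by (simp add: algebra_simps)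
    moreover have "th * s \<ge> 0" using th0 s0 by simp
    ultimately have "(th - e)^2 > (th * s)^2" by (simp add: power_strict_mono)
    then have "(th - e)^2 / th > (th*s)^2 / th" using th0 by (simp add: divide_strict_right_mono)
    moreover have "(th*s)^2 / th = th - x" using ss th0 by (simp add: field_simps power2_eq_square)
    ultimately show ?thesis using f by linarith
  qed
qed

theorem theorem2p3:
  fixes q L n :: nat and C :: "nat list set" and \<delta> :: real
  assumes "q \<ge> 2" and "L \<ge> 2"
    and "C \<subseteq> words q n"
    and "\<forall>cs. length cs = L \<and> distinct cs \<and> set cs \<subseteq> C \<longrightarrow>
           (\<Sum>i<L. \<Sum>j<L. if i < j then rel_dist (cs ! i) (cs ! j) else 0)
             / real (L choose 2) \<ge> \<delta>"
  shows "list_decodable q n C (johnson q (\<delta> - \<delta> / real L)) (L - 1)"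
proof -
  have finW: "finite (words q n)" unfolding words_def
    using finite_lists_length_eq[of "{..<q}" n] by (simp add: conj_commute)
  define rho where "rho = johnson q (\<delta> - \<delta> / real L)"
  have "list_decodable q n C rho (L - 1)"
    unfolding list_decodable_def
  proof (rule ballI, rule ccontr)
    fix y assume y: "y \<in> words q n" and nc: "\<not> card {c \<in> C. rel_dist c y < rho} \<le> L - 1"
    define S where "S = {c \<in> C. rel_dist c y < rho}"
    have SW: "S \<subseteq> words q n" using assms(3) unfolding S_def by auto
    have finS: "finite S" using finite_subset[OF SW finW] .
    have "L \<le> card S" using nc assms(2) unfolding S_def by linarith
    then obtain T where TS: "T \<subseteq> S" and cT: "card T = L"
      using obtain_subset_with_card_n by metis
    have finT: "finite T" using TS finS finite_subset by blast
    obtain cs where scs: "set cs = T" and dcs: "distinct cs" using finite_distinct_list[OF finT] by blast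
    have lcs: "length cs = L" using distinct_card[OF dcs] scs cT by simp
    have avg: "\<delta> \<le> (\<Sum>i<L. \<Sum>j<L. if i < j then rel_dist (cs ! i) (cs ! j) else 0) / real (L choose 2)"
      using assms(4) lcs dcs scs TS unfolding S_def by auto
    define c where "c i = cs ! i" for i
    have cS: "\<forall>i<L. c i \<in> S" using lcs scs TS unfolding c_def by (auto simp: nth_mem subset_iff)
    have cW: "\<forall>i<L. c i \<in> words q n" using cS assms(3) unfolding S_def by auto
    have len: "\<forall>i<L. length (c i) = n" using cW unfolding words_def by auto
    have ent: "\<forall>i<L. \<forall>k<n. c i ! k < q" using cW unfolding words_def
      by (auto simp: subset_iff)
    have ylen: "length y = n" using y unfolding words_def by auto
    have yent: "\<forall>k<n. y ! k < q" using y unfolding words_def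
      by (auto simp: subset_iff)
    have close: "\<forall>i<L. rel_dist (c i) y < rho" using cS unfolding S_def by auto
    have n0: "n > 0"
    proof (rule ccontr)
      assume "\<not> n > 0"
      then have "c 0 = c 1" using len assms(2) by auto
      then show False using dcs lcs assms(2) unfolding c_def by (simp add: nth_eq_iff_index_eq)
    qed
    have D: "\<forall>i<L. \<forall>j<L. real n * rel_dist (c i) (c j) = (\<Sum>k<n. if c i!k \<noteq> c j!k then 1 else 0)"
      using rel_dist_sum len n0 by simp
    have Dy: "\<forall>i<L. real n * rel_dist (c i) y = (\<Sum>k<n. if c i!k \<noteq> y!k then 1 else 0)"
      using rel_dist_sum len n0 by simp
    define m where "m k b = (\<Sum>i<L. if c i ! k = b then 1 else 0::real)" for k b
    define t where "t k = m k (y!k)" for k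
    define E where "E = (\<Sum>i<L. rel_dist (c i) y)"
    define P where "P = (\<Sum>i<L. \<Sum>j<L. rel_dist (c i) (c j))"
    have "real n * P = (\<Sum>i<L. \<Sum>j<L. \<Sum>k<n. if c i!k \<noteq> c j!k then 1 else 0::real)"
      unfolding P_def sum_distrib_left using D by (intro sum.cong refl) auto
    also have "\<dots> = (\<Sum>i<L. \<Sum>k<n. \<Sum>j<L. if c i!k \<noteq> c j!k then 1 else 0::real)"
      by (rule sum.cong[OF refl], rule sum.swap)
    also have "\<dots> = (\<Sum>k<n. \<Sum>i<L. \<Sum>j<L. if c i!k \<noteq> c j!k then 1 else 0::real)"
      by (rule sum.swap)
    also have "\<dots> = (\<Sum>k<n. real L ^ 2 - (\<Sum>b<q. (m k b)^2))"
    proof (intro sum.cong refl)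
      fix k assume k: "k \<in> {..<n}"
      have "(\<Sum>i<L. \<Sum>j<L. if c i!k \<noteq> c j!k then 1 else 0::real)
          = (\<Sum>i<L. \<Sum>j<L. 1 - (if c i!k = c j!k then 1 else 0::real))"
        by (intro sum.cong) auto
      also have "\<dots> = real L * real L - (\<Sum>i<L. \<Sum>j<L. if c i!k = c j!k then 1 else 0::real)"
        by (simp add: sum_subtractf)
      also have "(\<Sum>i<L. \<Sum>j<L. if c i!k = c j!k then 1 else 0::real) = (\<Sum>b<q. (m k b)^2)"
        unfolding m_def using count_sq[of L "\<lambda>i. c i ! k" q] ent k by simp
      finally show "(\<Sum>i<L. \<Sum>j<L. if c i!k \<noteq> c j!k then 1 else 0::real) = real L ^ 2 - (\<Sum>b<q. (m k b)^2)"
        by (simp add: power2_eq_square)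
    qed
    finally have nP: "real n * P = (\<Sum>k<n. real L ^ 2 - (\<Sum>b<q. (m k b)^2))" .
    have pc: "\<forall>k<n. (\<Sum>b<q. (m k b)^2) \<ge> (t k)^2 + (real L - t k)^2 / (real q - 1)"
    proof (intro allI impI)
      fix k assume k: "k < n"
      show "(\<Sum>b<q. (m k b)^2) \<ge> (t k)^2 + (real L - t k)^2 / (real q - 1)"
        unfolding t_def m_def using per_coord[of L "\<lambda>i. c i ! k" q "y!k"] ent yent k assms(1) by simp
    qed
    have sumt: "(\<Sum>k<n. t k) = real n * real L - real n * E"
    proof -
      have "(\<Sum>k<n. t k) = (\<Sum>k<n. \<Sum>i<L. if c i ! k = y!k then 1 else 0::real)"
        unfolding t_def m_def by simp
      also have "\<dots> = (\<Sum>i<L. \<Sum>k<n. if c i ! k = y!k then 1 else 0::real)" by (rule sum.swap)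
      also have "\<dots> = (\<Sum>i<L. real n - real n * rel_dist (c i) y)"
      proof (intro sum.cong refl)
        fix i assume i: "i \<in> {..<L}"
        have "(\<Sum>k<n. if c i ! k = y!k then 1 else 0::real) = (\<Sum>k<n. 1 - (if c i ! k \<noteq> y!k then 1 else 0::real))"
          by (intro sum.cong) auto
        also have "\<dots> = real n - (\<Sum>k<n. if c i ! k \<noteq> y!k then 1 else 0::real)"
          by (simp add: sum_subtractf)
        finally show "(\<Sum>k<n. if c i ! k = y!k then 1 else 0::real) = real n - real n * rel_dist (c i) y"
          using Dy i by simp
      qed
      also have "\<dots> = real n * real L - real n * E"
        unfolding E_def by (simp add: sum_subtractf sum_distrib_left)
      finally show ?thesis .
    qed
    have sumu: "(\<Sum>k<n. real L - t k) = real n * E"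
      using sumt by (simp add: sum_subtractf)
    define A where "A = (\<Sum>k<n. (t k)^2)"
    define B where "B = (\<Sum>k<n. (real L - t k)^2)"
    have csT: "(real n * real L - real n * E)^2 \<le> A * real n"
      using sum_squared_le_sum_of_squares[of t "{..<n}"] sumt unfolding A_def by simp
    have csU: "(real n * E)^2 \<le> B * real n"
      using sum_squared_le_sum_of_squares[of "\<lambda>k. real L - t k" "{..<n}"] sumu unfolding B_def by simp
    have rn: "real n > 0" using n0 by simp
    have A1: "real n * (real L - E)^2 \<le> A"
    proof -
      have "real n * (real n * (real L - E)^2) \<le> real n * A"
        using csT by (simp add: power2_eq_square algebra_simps)
      then show ?thesis using rn by simp
    qed
    have B1: "real n * E^2 \<le> B"
    proof -
      have "real n * (real n * E^2) \<le> real n * B"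
        using csU by (simp add: power2_eq_square algebra_simps)
      then show ?thesis using rn by simp
    qed
    have q1: "real q - 1 > 0" using assms(1) by simp
    have "real n * P \<le> (\<Sum>k<n. real L ^ 2 - ((t k)^2 + (real L - t k)^2 / (real q - 1)))"
      unfolding nP using pc by (intro sum_mono) auto
    also have "\<dots> = real n * real L^2 - A - B / (real q - 1)"
      unfolding A_def B_def by (simp add: sum_subtractf sum.distrib sum_divide_distrib)
    also have "\<dots> \<le> real n * real L^2 - real n * (real L - E)^2 - real n * E^2 / (real q - 1)"
      using A1 B1 q1 by (smt (verit) divide_right_mono)
    finally have "real n * P \<le> real n * (real L^2 - (real L - E)^2 - E^2 / (real q - 1))"
      by (simp add: algebra_simps)
    then have Pb: "P \<le> real L^2 - (real L - E)^2 - E^2 / (real q - 1)" using rn by simp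
    have rL: "real L \<ge> 2" using assms(2) by simp
    have E0: "E \<ge> 0" unfolding E_def rel_dist_def by (intro sum_nonneg) simp
    have EL: "E < real L * rho"
    proof -
      have "E < (\<Sum>i<L. rho)" unfolding E_def using close assms(2)
        by (intro sum_strict_mono) (auto simp: lessThan_empty_iff)
      then show ?thesis by simp
    qed
    define e where "e = E / real L"
    have e0: "e \<ge> 0" using E0 rL unfolding e_def by simp
    have erho: "e < rho" using EL rL unfolding e_def by (simp add: divide_less_eq mult.commute)
    have fin: "2*e - real q * e^2 / (real q - 1) < \<delta> - \<delta> / real L"
      using final_ineq[of "real q" e "\<delta> - \<delta> / real L"] e0 erho assms(1)
      unfolding rho_def johnson_def by simp
    have "real L^2 - (real L - E)^2 - E^2 / (real q - 1) = real L^2 * (2*e - real q * e^2 / (real q - 1))"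
      unfolding e_def using rL q1 by (simp add: field_simps power2_eq_square)
    also have "\<dots> < real L^2 * (\<delta> - \<delta> / real L)"
      using fin rL by simp
    also have "\<dots> = real L * (real L - 1) * \<delta>"
      using rL by (simp add: field_simps power2_eq_square)
    finally have PL: "P < real L * (real L - 1) * \<delta>" using Pb by linarith
    have H: "(\<Sum>i<L. \<Sum>j<L. if i < j then rel_dist (cs ! i) (cs ! j) else 0) = P / 2"
    proof -
      have "(\<Sum>i<L. \<Sum>j<L. if i < j then rel_dist (c i) (c j) else 0) = P / 2"
        unfolding P_def
      proof (rule half_sum)
        fix i j assume i: "i < L" and j: "j < L"
        have "(\<Sum>k<n. if c i!k \<noteq> c j!k then 1 else 0::real) = (\<Sum>k<n. if c j!k \<noteq> c i!k then 1 else 0::real)"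
          by (intro sum.cong) auto
        then have "real n * rel_dist (c i) (c j) = real n * rel_dist (c j) (c i)" using D i j by simp
        then show "rel_dist (c i) (c j) = rel_dist (c j) (c i)" using rn by simp
      next
        fix i assume "i < L" show "rel_dist (c i) (c i) = 0" unfolding rel_dist_def by simp
      qed
      then show ?thesis unfolding c_def .
    qed
    have cL: "real (L choose 2) = real L * (real L - 1) / 2" by (rule choose2_real)
    have pos: "real L * (real L - 1) > 0" using rL by simp
    have "\<delta> \<le> (P / 2) / (real L * (real L - 1) / 2)" using avg H cL by simp
    also have "\<dots> = P / (real L * (real L - 1))" by simp
    finally have "\<delta> * (real L * (real L - 1)) \<le> P" using pos by (simp add: le_divide_eq)
    then show False using PL by (simp add: algebra_simps)
  qed
  then show ?thesis unfolding rho_def .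
qed

end
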